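(* Let $n_b\ge1$ be fixed and let $\{P_n\}$ be a density matrix sequence. Assume there is $c>0$ independent of $n$ with $|[P_n]_{ij}|\le c/(|i-j|+1)$ for all $i,j=1,\dots,n$ and all $n$. Then for every $\epsilon>0$ there is a positive integer $\bar m$ independent of $n$ such that $$\frac{\|P_n-P_n^{(m)}\|_F}{\|P_n\|_F}\le\epsilon\quad\text{for all } m\ge\bar m \text{ and all } n.$$
   Context: A density matrix sequence is a sequence $\{P_n\}$ where, for $n=n_bn_e$ with $n_b$ fixed and $n_e\to\infty$, each $P_n$ is an $n\times n$ orthogonal projector ($P_n=P_n^*=P_n^2$) with $\mathrm{Tr}(P_n)=\mathrm{rank}(P_n)=n_e$ (so $\|P_n\|_F=\sqrt{n_e}$). For a matrix $A$ and integer $m\ge0$, $A^{(m)}$ is the $m$-banded truncation: $[A^{(m)}]_{ij}=A_{ij}$ if $|i-j|\le m$ and $0$ otherwise. $\|\cdot\|_F$ is the Frobenius norm. *)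

theory Defs
  imports Complex_Main "Jordan_Normal_Form.Schur_Decomposition" "Jordan_Normal_Form.DL_Rank"
begin

definition band_trunc :: "nat \<Rightarrow> complex mat \<Rightarrow> complex mat" where
  "band_trunc m A = mat (dim_row A) (dim_col A)
     (\<lambda>(i,j). if (if i \<le> j then j - i else i - j) \<le> m then A $$ (i,j) else 0)"

definition mat_trace :: "complex mat \<Rightarrow> complex" where
  "mat_trace A = (\<Sum>i<dim_row A. A $$ (i,i))"

definition frob_norm :: "complex mat \<Rightarrow> real" where
  "frob_norm A = sqrt (\<Sum>i<dim_row A. \<Sum>j<dim_col A. (cmod (A $$ (i,j)))\<^sup>2)"

definition density_matrix_seq :: "nat \<Rightarrow> (nat \<Rightarrow> complex mat) \<Rightarrow> bool" where
  "density_matrix_seq nb P \<longleftrightarrow> (\<forall>ne\<ge>1.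
      P ne \<in> carrier_mat (nb*ne) (nb*ne) \<and>
      mat_adjoint (P ne) = P ne \<and>
      P ne * P ne = P ne \<and>
      mat_trace (P ne) = of_nat ne \<and>
      vec_space.rank (nb*ne) (P ne) = ne)"

end

theory Submission
  imports Defs
begin
lemma adj_idx: assumes "P \<in> carrier_mat N N" "i < N" "j < N"
  shows "mat_adjoint P $$ (i,j) = cnj (P $$ (j,i))"
  using assms unfolding mat_adjoint_def by (simp add: mat_of_rows_def)

lemma frob_proj:
  assumes P: "P \<in> carrier_mat N N" and adj: "mat_adjoint P = P" and idem: "P * P = P"
  shows "(frob_norm P)\<^sup>2 = Re (mat_trace P)"
proof -
  have diag: "P $$ (i,i) = (\<Sum>j<N. complex_of_real ((cmod (P $$ (i,j)))\<^sup>2))" if i: "i < N" for i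
  proof -
    have "P $$ (i,i) = (P*P) $$ (i,i)" using idem by simp
    also have "\<dots> = (\<Sum>j<N. P $$ (i,j) * P $$ (j,i))"
      using P i by (simp add: scalar_prod_def lessThan_atLeast0)
    also have "\<dots> = (\<Sum>j<N. complex_of_real ((cmod (P $$ (i,j)))\<^sup>2))"
    proof (rule sum.cong[OF refl])
      fix j assume j: "j \<in> {..<N}"
      have "P $$ (j,i) = cnj (P $$ (i,j))"
        using adj_idx[OF P, of j i] adj j i by simp
      thus "P $$ (i,j) * P $$ (j,i) = complex_of_real ((cmod (P $$ (i,j)))\<^sup>2)"
        by (simp only: complex_norm_square)
    qed
    finally show ?thesis .
  qed
  have "Re (mat_trace P) = (\<Sum>i<N. \<Sum>j<N. (cmod (P $$ (i,j)))\<^sup>2)"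
    unfolding mat_trace_def using P diag by (simp add: Re_sum)
  moreover have "(frob_norm P)\<^sup>2 = (\<Sum>i<N. \<Sum>j<N. (cmod (P $$ (i,j)))\<^sup>2)"
    unfolding frob_norm_def using P by (simp add: sum_nonneg)
  ultimately show ?thesis by simp
qed

lemma tail_sum: "(\<Sum>d\<in>{m<..<N}. 1/(real d+1)^2) \<le> 1/(real m+1) - 1/real (max N (m+1))"
proof (induction N)
  case 0 then show ?case by (simp add: add.commute)
next
  case (Suc N)
  show ?case
  proof (cases "N \<le> m")
    case True
    then have "{m<..<Suc N} = {}" by auto
    with True show ?thesis by (simp add: add.commute)
  next
    case False
    then have s: "{m<..<Suc N} = insert N {m<..<N}" by auto
    have mx: "max N (m+1) = N" "max (Suc N) (m+1) = Suc N" using False by auto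
    have N0: "real N \<ge> 1" using False by simp
    have k1: "1/(real N+1)^2 \<le> 1/(real N*(real N+1))"
      using N0 by (intro divide_left_mono) (auto simp: power2_eq_square)
    have k2: "1/real N - 1/(real N + 1) = 1/(real N*(real N+1))"
      using N0 by (simp add: field_simps)
    have key: "1/(real N+1)^2 \<le> 1/real N - 1/(real N + 1)"
      using k1 k2 by simp
    have e1: "(\<Sum>d\<in>insert N {m<..<N}. 1/(real d+1)^2) = 1/(real N+1)^2 + (\<Sum>d\<in>{m<..<N}. 1/(real d+1)^2)" by simp
    have e2: "real (Suc N) = real N + 1" by simp
    show ?thesis using Suc.IH key by (simp only: s mx e1 e2)
  qed
qed

lemma row_sum:
  fixes m N i :: nat
  assumes iN: "i < N"
  shows "(\<Sum>j<N. if m < (if i \<le> j then j - i else i - j)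
            then 1/(real (if i \<le> j then j - i else i - j)+1)^2 else 0) \<le> 2/(real m+1)"
  (is "?L \<le> _")
proof -
  define g where "g = (\<lambda>d::nat. 1/(real d+1)^2)"
  have g0: "\<And>d. g d \<ge> 0" unfolding g_def by simp
  define A1 where "A1 = {j\<in>{..<N}. i \<le> j \<and> m < j - i}"
  define A2 where "A2 = {j\<in>{..<N}. \<not> i \<le> j \<and> m < i - j}"
  have "?L
        = (\<Sum>j<N. (if j \<in> A1 then g (j - i) else 0) + (if j \<in> A2 then g (i - j) else 0))"
    by (rule sum.cong) (auto simp: A1_def A2_def g_def)
  also have "\<dots> = (\<Sum>j\<in>A1. g (j - i)) + (\<Sum>j\<in>A2. g (i - j))"
    by (simp add: sum.distrib sum.If_cases A1_def A2_def Int_def)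
  finally have e: "?L = (\<Sum>j\<in>A1. g (j - i)) + (\<Sum>j\<in>A2. g (i - j))" .
  have "(\<Sum>j\<in>A1. g (j - i)) = (\<Sum>d\<in>(\<lambda>j. j - i) ` A1. g d)"
    by (rule sum.reindex[symmetric, unfolded o_def]) (auto simp: inj_on_def A1_def)
  also have "\<dots> \<le> (\<Sum>d\<in>{m<..<N}. g d)"
    by (rule sum_mono2) (auto simp: A1_def g0)
  finally have b1: "(\<Sum>j\<in>A1. g (j - i)) \<le> (\<Sum>d\<in>{m<..<N}. g d)" .
  have "(\<Sum>j\<in>A2. g (i - j)) = (\<Sum>d\<in>(\<lambda>j. i - j) ` A2. g d)"
    by (rule sum.reindex[symmetric, unfolded o_def]) (use iN in \<open>auto simp: inj_on_def A2_def\<close>)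
  also have "\<dots> \<le> (\<Sum>d\<in>{m<..<N}. g d)"
    by (rule sum_mono2) (use iN in \<open>auto simp: A2_def g0\<close>)
  finally have b2: "(\<Sum>j\<in>A2. g (i - j)) \<le> (\<Sum>d\<in>{m<..<N}. g d)" .
  have t: "(\<Sum>d\<in>{m<..<N}. g d) \<le> 1/(real m+1)"
    using tail_sum[of m N] unfolding g_def by (smt (verit) of_nat_0_le_iff divide_nonneg_nonneg)
  show ?thesis using e b1 b2 t by linarith
qed

lemma frob_nonneg: "frob_norm A \<ge> 0" unfolding frob_norm_def by (intro real_sqrt_ge_zero sum_nonneg) auto

lemma frob_sq: "frob_norm A = sqrt ((frob_norm A)\<^sup>2)"
  using frob_nonneg[of A] by simp

theorem theorem7p3:
  fixes nb :: nat and P :: "nat \<Rightarrow> complex mat" and c :: real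
  assumes "nb \<ge> 1"
    and "density_matrix_seq nb P"
    and "c > 0"
    and "\<forall>ne\<ge>1. \<forall>i<nb*ne. \<forall>j<nb*ne.
           cmod (P ne $$ (i,j)) \<le> c / (\<bar>real i - real j\<bar> + 1)"
  shows "\<forall>\<epsilon>>0. \<exists>mbar::nat. mbar > 0 \<and>
           (\<forall>m\<ge>mbar. \<forall>ne\<ge>1.
              frob_norm (P ne - band_trunc m (P ne)) / frob_norm (P ne) \<le> \<epsilon>)"
proof (intro allI impI)
  fix \<epsilon> :: real assume ep: "\<epsilon> > 0"
  define K where "K = 2 * real nb * c^2"
  define mbar where "mbar = nat \<lceil>K / \<epsilon>^2\<rceil> + 1"
  show "\<exists>mbar::nat. mbar > 0 \<and>
           (\<forall>m\<ge>mbar. \<forall>ne\<ge>1.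
              frob_norm (P ne - band_trunc m (P ne)) / frob_norm (P ne) \<le> \<epsilon>)"
  proof (intro exI conjI allI impI)
    show "mbar > 0" unfolding mbar_def by simp
    fix m ne :: nat assume m: "mbar \<le> m" and ne: "1 \<le> ne"
    define N where "N = nb * ne"
    have PC: "P ne \<in> carrier_mat N N" and adj: "mat_adjoint (P ne) = P ne"
      and idem: "P ne * P ne = P ne" and tr: "mat_trace (P ne) = of_nat ne"
      using assms(2) ne unfolding density_matrix_seq_def N_def by auto
    have bnd: "\<And>i j. i < N \<Longrightarrow> j < N \<Longrightarrow> cmod (P ne $$ (i,j)) \<le> c / (\<bar>real i - real j\<bar> + 1)"
      using assms(4) ne unfolding N_def by auto
    have fP2: "(frob_norm (P ne))\<^sup>2 = real ne"
      using frob_proj[OF PC adj idem] tr by simp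
    have fP: "frob_norm (P ne) = sqrt (real ne)"
      using fP2 frob_sq[of "P ne"] by simp
    define D where "D = P ne - band_trunc m (P ne)"
    define dd where "dd = (\<lambda>i j::nat. if i \<le> j then j - i else i - j)"
    have dimD: "dim_row D = N" "dim_col D = N"
      using PC unfolding D_def band_trunc_def by auto
    have Dij: "D $$ (i,j) = (if m < dd i j then P ne $$ (i,j) else 0)" if "i < N" "j < N" for i j
      using PC that unfolding D_def band_trunc_def dd_def by auto
    have ent: "(cmod (D $$ (i,j)))\<^sup>2 \<le> c^2 * (if m < dd i j then 1/(real (dd i j)+1)^2 else 0)"
      if ij: "i < N" "j < N" for i j
    proof (cases "m < dd i j")
      case True
      have ab: "\<bar>real i - real j\<bar> = real (dd i j)" unfolding dd_def by auto
      have "cmod (P ne $$ (i,j)) \<le> c / (real (dd i j) + 1)" using bnd[OF ij] ab by simp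
      hence "(cmod (P ne $$ (i,j)))\<^sup>2 \<le> (c / (real (dd i j) + 1))\<^sup>2"
        by (intro power_mono) auto
      thus ?thesis using True Dij[OF ij] by (simp add: power_divide)
    next
      case False thus ?thesis using Dij[OF ij] by simp
    qed
    have rs: "\<And>i. i < N \<Longrightarrow> (\<Sum>j<N. (if m < dd i j then 1/(real (dd i j)+1)^2 else 0)) \<le> 2/(real m+1)"
      unfolding dd_def by (rule row_sum)
    have "(frob_norm D)\<^sup>2 = (\<Sum>i<N. \<Sum>j<N. (cmod (D $$ (i,j)))\<^sup>2)"
      unfolding frob_norm_def dimD by (simp add: sum_nonneg)
    also have "\<dots> \<le> (\<Sum>i<N. \<Sum>j<N. c^2 * (if m < dd i j then 1/(real (dd i j)+1)^2 else 0))"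
      by (intro sum_mono ent) auto
    also have "\<dots> = (\<Sum>i<N. c^2 * (\<Sum>j<N. (if m < dd i j then 1/(real (dd i j)+1)^2 else 0)))"
      by (simp add: sum_distrib_left)
    also have "\<dots> \<le> (\<Sum>i<N. c^2 * (2/(real m+1)))"
      by (intro sum_mono mult_left_mono rs) auto
    also have "\<dots> = real N * c^2 * 2/(real m+1)" by simp
    finally have fD2: "(frob_norm D)\<^sup>2 \<le> real N * c^2 * 2/(real m+1)" .
    have fD: "frob_norm D = sqrt ((frob_norm D)\<^sup>2)"
      by (rule frob_sq)
    have nepos: "real ne > 0" using ne by simp
    have "frob_norm D / frob_norm (P ne) = sqrt ((frob_norm D)\<^sup>2 / real ne)"
      using fD fP by (simp add: real_sqrt_divide)
    also have "\<dots> \<le> sqrt (K / (real m + 1))"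
    proof (rule real_sqrt_le_mono)
      have "(frob_norm D)\<^sup>2 / real ne \<le> (real N * c^2 * 2/(real m+1)) / real ne"
        using fD2 nepos by (intro divide_right_mono) auto
      also have "\<dots> = K / (real m + 1)"
      proof -
        have p: "real ne + real m * real ne > 0" using nepos by (simp add: add_pos_nonneg)
        show ?thesis using nepos p unfolding N_def K_def by (simp add: field_simps)
      qed
      finally show "(frob_norm D)\<^sup>2 / real ne \<le> K / (real m + 1)" .
    qed
    also have "\<dots> \<le> sqrt (\<epsilon>^2)"
    proof (rule real_sqrt_le_mono)
      have "K / \<epsilon>^2 \<le> real (nat \<lceil>K / \<epsilon>^2\<rceil>)" by linarith
      also have "\<dots> \<le> real m + 1" using m unfolding mbar_def by simp
      finally have "K / \<epsilon>^2 \<le> real m + 1" .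
      hence "K \<le> \<epsilon>^2 * (real m + 1)" using ep by (simp add: field_simps)
      thus "K / (real m + 1) \<le> \<epsilon>^2" by (simp add: field_simps)
    qed
    also have "\<dots> = \<epsilon>" using ep by simp
    finally show "frob_norm (P ne - band_trunc m (P ne)) / frob_norm (P ne) \<le> \<epsilon>"
      unfolding D_def .
  qed
qed
end
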